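(* Let $\mathcal{Z}^\omega$ be the set of germs at $o=(0,0)$ of maps $F(x,y)=(f(x,y),x,y)$ into $\mathbf{R}^3_1$, with $f$ a real analytic function germ at $o$, $f(0,0)=0$, $f_x(0,0)=0$, $f_y(0,0)=1$, such that $A_F\equiv 0$, and let $\Lambda^\omega$ be the set of such germs (same normalizations) with $B_F\equiv 0$. For $F$ let $\gamma_F(x):=(f(x,0),f_y(x,0))$. Then $$\Lambda^\omega=\Big\{F\in\mathcal{Z}^\omega\ ;\ \gamma_F=\big(\psi,\sqrt{1-\dot\psi^2}\big)\ \text{for some }\psi\in C^\omega_o(\mathbf{R},0_2)\Big\},$$ where $\dot\psi=d\psi/dx$ and $C^\omega_o(\mathbf{R},0_2)$ is the set of germs at $0$ of real analytic functions $\psi$ with $\psi(0)=\psi'(0)=0$.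
   Context: $\mathbf{R}^3_1$ is Lorentz–Minkowski 3-space with coordinates $(t,x,y)$ and inner product $-dt^2+dx^2+dy^2$. For $F(x,y)=(f(x,y),x,y)$, $B_F:=1-f_x^2-f_y^2$ and $A_F:=(1-f_x^2)f_{yy}+2f_xf_yf_{xy}+(1-f_y^2)f_{xx}$. *)

theory Defs
  imports "HOL-Analysis.Analysis"
begin

text \<open>Real analyticity of a function of two real variables at a point: on some open
  square around the point it is the (unconditionally, hence absolutely, convergent)
  sum of a double power series centred at the point.\<close>
definition real_analytic_at2 :: "(real \<times> real \<Rightarrow> real) \<Rightarrow> real \<times> real \<Rightarrow> bool" where
  "real_analytic_at2 f p \<longleftrightarrow>
     (\<exists>r>0. \<exists>c :: nat \<Rightarrow> nat \<Rightarrow> real. \<forall>x y. \<bar>x - fst p\<bar> < r \<and> \<bar>y - snd p\<bar> < r \<longrightarrow>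
        ((\<lambda>(i, j). c i j * (x - fst p) ^ i * (y - snd p) ^ j) has_sum f (x, y)) UNIV)"

definition real_analytic_at1 :: "(real \<Rightarrow> real) \<Rightarrow> real \<Rightarrow> bool" where
  "real_analytic_at1 g a \<longleftrightarrow>
     (\<exists>r>0. \<exists>c :: nat \<Rightarrow> real. \<forall>x. \<bar>x - a\<bar> < r \<longrightarrow> (\<lambda>n. c n * (x - a) ^ n) sums g x)"

definition pdx :: "(real \<times> real \<Rightarrow> real) \<Rightarrow> real \<times> real \<Rightarrow> real" where
  "pdx f = (\<lambda>(x, y). deriv (\<lambda>s. f (s, y)) x)"

definition pdy :: "(real \<times> real \<Rightarrow> real) \<Rightarrow> real \<times> real \<Rightarrow> real" where
  "pdy f = (\<lambda>(x, y). deriv (\<lambda>t. f (x, t)) y)"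

definition B_F :: "(real \<times> real \<Rightarrow> real) \<Rightarrow> real \<times> real \<Rightarrow> real" where
  "B_F f p = 1 - (pdx f p)\<^sup>2 - (pdy f p)\<^sup>2"

definition A_F :: "(real \<times> real \<Rightarrow> real) \<Rightarrow> real \<times> real \<Rightarrow> real" where
  "A_F f p = (1 - (pdx f p)\<^sup>2) * pdy (pdy f) p
           + 2 * pdx f p * pdy f p * pdy (pdx f) p
           + (1 - (pdy f p)\<^sup>2) * pdx (pdx f) p"

definition normalized_germ :: "(real \<times> real \<Rightarrow> real) \<Rightarrow> bool" where
  "normalized_germ f \<longleftrightarrow> real_analytic_at2 f (0, 0) \<and> f (0, 0) = 0
      \<and> pdx f (0, 0) = 0 \<and> pdy f (0, 0) = 1"

definition in_Z :: "(real \<times> real \<Rightarrow> real) \<Rightarrow> bool" where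
  "in_Z f \<longleftrightarrow> normalized_germ f \<and> (\<forall>\<^sub>F p in nhds (0, 0). A_F f p = 0)"

definition in_Lambda :: "(real \<times> real \<Rightarrow> real) \<Rightarrow> bool" where
  "in_Lambda f \<longleftrightarrow> normalized_germ f \<and> (\<forall>\<^sub>F p in nhds (0, 0). B_F f p = 0)"

definition in_C_omega_02 :: "(real \<Rightarrow> real) \<Rightarrow> bool" where
  "in_C_omega_02 \<psi> \<longleftrightarrow> real_analytic_at1 \<psi> 0 \<and> \<psi> 0 = 0 \<and> deriv \<psi> 0 = 0"

definition gamma_F :: "(real \<times> real \<Rightarrow> real) \<Rightarrow> real \<Rightarrow> real \<times> real" where
  "gamma_F f x = (f (x, 0), pdy f (x, 0))"

end

theory Submission
  imports Defs
begin

definition psr :: "(nat \<Rightarrow> nat \<Rightarrow> real) \<Rightarrow> real \<Rightarrow> (real \<times> real \<Rightarrow> real) \<Rightarrow> bool" where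
  "psr c r F \<longleftrightarrow> (\<forall>x y. \<bar>x\<bar> < r \<and> \<bar>y\<bar> < r \<longrightarrow>
      ((\<lambda>(i,j). c i j * x ^ i * y ^ j) has_sum F (x, y)) UNIV)"

lemma psrD: "psr c r F \<Longrightarrow> \<bar>x\<bar> < r \<Longrightarrow> \<bar>y\<bar> < r \<Longrightarrow>
      ((\<lambda>(i,j). c i j * x ^ i * y ^ j) has_sum F (x, y)) UNIV"
  by (auto simp: psr_def)

lemma analytic_psr: "real_analytic_at2 f (0,0) \<Longrightarrow> \<exists>r>0. \<exists>c. psr c r f"
  by (auto simp: real_analytic_at2_def psr_def)

lemma psr_cong: "psr c r F \<Longrightarrow> (\<And>x y. \<bar>x\<bar> < r \<Longrightarrow> \<bar>y\<bar> < r \<Longrightarrow> F (x,y) = G (x,y)) \<Longrightarrow> psr c r G"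
  by (auto simp: psr_def)

lemma psr_mono: "psr c r F \<Longrightarrow> r' \<le> r \<Longrightarrow> psr c r' F"
  by (auto simp: psr_def)

lemma psr_add: assumes "psr c r F" "psr d r G" shows "psr (\<lambda>i j. c i j + d i j) r (\<lambda>z. F z + G z)"
  unfolding psr_def
proof (intro allI impI)
  fix x y :: real assume xy: "\<bar>x\<bar> < r \<and> \<bar>y\<bar> < r"
  have "((\<lambda>(i,j). c i j * x ^ i * y ^ j) has_sum F (x, y)) UNIV"
     "((\<lambda>(i,j). d i j * x ^ i * y ^ j) has_sum G (x, y)) UNIV" using assms xy by (auto simp: psr_def)
  from has_sum_add[OF this] show "((\<lambda>(i,j). (c i j + d i j) * x ^ i * y ^ j) has_sum F (x, y) + G (x,y)) UNIV"
    by (simp add: case_prod_unfold algebra_simps)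
qed

lemma psr_cmult: assumes "psr c r F" shows "psr (\<lambda>i j. a * c i j) r (\<lambda>z. a * F z)"
  unfolding psr_def
proof (intro allI impI)
  fix x y :: real assume xy: "\<bar>x\<bar> < r \<and> \<bar>y\<bar> < r"
  have "((\<lambda>(i,j). c i j * x ^ i * y ^ j) has_sum F (x, y)) UNIV" using assms xy by (auto simp: psr_def)
  from has_sum_cmult_right[OF this, of a] show "((\<lambda>(i,j). (a * c i j) * x ^ i * y ^ j) has_sum a * F (x, y)) UNIV"
    by (simp add: case_prod_unfold algebra_simps)
qed

lemma psr_diff: "psr c r F \<Longrightarrow> psr d r G \<Longrightarrow> psr (\<lambda>i j. c i j - d i j) r (\<lambda>z. F z - G z)"
  using psr_add[of c r F "\<lambda>i j. (-1) * d i j" "\<lambda>z. (-1) * G z"] psr_cmult[of d r G "-1"]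
  by simp

lemma has_sum_single: "((\<lambda>z. if z = a then v else 0) has_sum (v::real)) UNIV"
proof -
  have "((\<lambda>z. if z = a then v else 0) has_sum (\<Sum>z\<in>{a}. if z = a then v else 0)) {a}"
    by (rule has_sum_finite) simp
  hence "((\<lambda>z. if z = a then v else 0) has_sum v) {a}" by simp
  thus ?thesis by (rule has_sum_cong_neutral[THEN iffD1, rotated -1]) auto
qed

definition one2 :: "nat \<Rightarrow> nat \<Rightarrow> real" where "one2 i j = (if i = 0 \<and> j = 0 then 1 else 0)"

lemma psr_one: "psr one2 r (\<lambda>_. 1)"
  unfolding psr_def
proof (intro allI impI)
  fix x y :: real
  have "(\<lambda>(i,j). one2 i j * x ^ i * y ^ j) = (\<lambda>z. if z = (0::nat,0::nat) then 1 else 0)"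
    by (auto simp: one2_def fun_eq_iff)
  thus "((\<lambda>(i,j). one2 i j * x ^ i * y ^ j) has_sum 1) UNIV" using has_sum_single by simp
qed

lemma psr_unique_val: "psr c r F \<Longrightarrow> psr c r G \<Longrightarrow> \<bar>x\<bar> < r \<Longrightarrow> \<bar>y\<bar> < r \<Longrightarrow> F (x,y) = G (x,y)"
  by (meson has_sum_unique psrD)

lemma psr_at0: "psr c r F \<Longrightarrow> 0 < r \<Longrightarrow> F (0,0) = c 0 0"
proof -
  assume "psr c r F" "0 < r"
  hence h: "((\<lambda>(i,j). c i j * 0 ^ i * 0 ^ j) has_sum F (0, 0)) UNIV" using psrD[of c r F 0 0] by simp
  have "(\<lambda>(i,j). c i j * (0::real) ^ i * 0 ^ j) = (\<lambda>z. if z = (0::nat,0::nat) then c 0 0 else 0)"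
    by (auto simp: fun_eq_iff)
  with h has_sum_single[of "(0::nat,0::nat)" "c 0 0"] show ?thesis
    using has_sum_unique by fastforce
qed

lemma psr_slice:
  assumes "psr c r F" "\<bar>y\<bar> < r"
  shows "((\<lambda>j. c i j * y^j) has_sum (\<Sum>\<^sub>\<infinity>j. c i j * y^j)) UNIV"
    and "\<bar>x\<bar> < r \<Longrightarrow> (\<lambda>i. (\<Sum>\<^sub>\<infinity>j. c i j * y^j) * x^i) sums F (x,y)"
proof -
  define a where "a i = (\<Sum>\<^sub>\<infinity>j. c i j * y^j)" for i
  have r: "r > 0" using assms(2) by linarith
  have sm: "(\<lambda>j. c i j * y^j) summable_on UNIV" for i
  proof -
    have "((\<lambda>(i,j). c i j * (r/2) ^ i * y ^ j) has_sum F (r/2, y)) UNIV"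
      using psrD[OF assms(1), of "r/2" y] r assms(2) by simp
    hence "(\<lambda>(i,j). c i j * (r/2) ^ i * y ^ j) summable_on Sigma UNIV (\<lambda>_. UNIV)"
      using has_sum_imp_summable by force
    hence "(\<lambda>j. c i j * (r/2) ^ i * y ^ j) summable_on UNIV"
      by (rule summable_on_SigmaD1[where f = "\<lambda>i j. c i j * (r/2) ^ i * y ^ j"]) auto
    hence "(\<lambda>j. (1 / (r/2)^i) * (c i j * (r/2) ^ i * y ^ j)) summable_on UNIV"
      by (rule summable_on_cmult_right)
    moreover have "(\<lambda>j. (1 / (r/2)^i) * (c i j * (r/2) ^ i * y ^ j)) = (\<lambda>j. c i j * y^j)"
      using r by (auto simp: fun_eq_iff)
    ultimately show ?thesis by simp
  qed
  thus "((\<lambda>j. c i j * y^j) has_sum (\<Sum>\<^sub>\<infinity>j. c i j * y^j)) UNIV" by simp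
  assume x: "\<bar>x\<bar> < r"
  have h: "((\<lambda>(i,j). c i j * x ^ i * y ^ j) has_sum F (x, y)) (Sigma UNIV (\<lambda>_. UNIV))"
    using psrD[OF assms(1) x assms(2)] by simp
  have "((\<lambda>i. a i * x^i) has_sum F (x,y)) UNIV"
  proof (rule has_sum_Sigma'[OF h])
    fix i :: nat
    have "((\<lambda>j. c i j * y^j) has_sum a i) UNIV" using sm by (simp add: a_def)
    from has_sum_cmult_right[OF this, of "x^i"]
    show "((\<lambda>j. (\<lambda>(i,j). c i j * x ^ i * y ^ j) (i, j)) has_sum a i * x^i) UNIV"
      by (simp add: algebra_simps)
  qed
  thus "(\<lambda>i. (\<Sum>\<^sub>\<infinity>j. c i j * y^j) * x^i) sums F (x,y)"
    unfolding a_def by (rule has_sum_imp_sums)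
qed

lemma powser_unique0:
  fixes a :: "nat \<Rightarrow> real"
  assumes r: "r > 0" and s: "\<And>x. \<bar>x\<bar> < r \<Longrightarrow> (\<lambda>n. a n * x^n) sums 0"
  shows "a n = 0"
proof (induction n rule: less_induct)
  case (less n)
  define g where "g x = (\<Sum>k. a (k+n) * x^k)" for x
  have gs: "(\<lambda>k. a (k+n) * x^k) sums 0" if "x \<noteq> 0" "\<bar>x\<bar> < r" for x
  proof -
    have "(\<lambda>i. a (i+n) * x^(i+n)) sums (0 - (\<Sum>i<n. a i * x^i))"
      using sums_split_initial_segment[OF s[OF that(2)]] .
    moreover have "(\<Sum>i<n. a i * x^i) = 0" using less.IH by simp
    ultimately have "(\<lambda>i. a (i+n) * x^(i+n)) sums 0" by simp
    hence "(\<lambda>i. a (i+n) * x^(i+n) / x^n) sums (0 / x^n)" by (rule sums_divide)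
    moreover have "(\<lambda>i. a (i+n) * x^(i+n) / x^n) = (\<lambda>k. a (k+n) * x^k)"
      using that(1) by (auto simp: fun_eq_iff power_add)
    ultimately show ?thesis by simp
  qed
  have gz: "g x = 0" if "x \<noteq> 0" "\<bar>x\<bar> < r" for x
    using gs[OF that] unfolding g_def by (simp add: sums_iff)
  have "summable (\<lambda>k. a (k+n) * (r/2)^k)" using gs[of "r/2"] r by (auto simp: sums_iff)
  hence "isCont g 0" unfolding g_def by (rule isCont_powser) (use r in simp)
  hence t1: "g \<midarrow>0\<rightarrow> g 0" by (simp add: isCont_def)
  have "eventually (\<lambda>x. g x = 0) (at (0::real))"
    unfolding eventually_at using r gz by (auto intro!: exI[of _ r] simp: dist_real_def)
  hence "g \<midarrow>0\<rightarrow> 0" by (simp add: tendsto_eventually)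
  with t1 have "g 0 = 0" by (metis at_neq_bot tendsto_unique)
  moreover have "g 0 = a n" unfolding g_def using powser_zero[of "\<lambda>k. a (k+n)"] by simp
  ultimately show ?case by simp
qed

lemma psr_zero:
  assumes "psr c r (\<lambda>_. 0)" "r > 0"
  shows "c i j = 0"
proof -
  have "(\<Sum>\<^sub>\<infinity>j. c i j * y^j) = 0" if y: "\<bar>y\<bar> < r" for y
    using powser_unique0[OF assms(2) psr_slice(2)[OF assms(1) y]] .
  hence "(\<lambda>j. c i j * y^j) sums 0" if y: "\<bar>y\<bar> < r" for y
    using psr_slice(1)[OF assms(1) y, of i] y has_sum_imp_sums by fastforce
  thus ?thesis using powser_unique0[OF assms(2)] by blast
qed

definition dxc :: "(nat \<Rightarrow> nat \<Rightarrow> real) \<Rightarrow> nat \<Rightarrow> nat \<Rightarrow> real" where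
  "dxc c i j = of_nat (Suc i) * c (Suc i) j"

lemma n_pow_bound:
  fixes t :: real assumes "0 \<le> t" "t < 1"
  shows "\<exists>K. \<forall>n. of_nat (Suc n) * t^n \<le> K"
proof -
  have "(\<lambda>n. of_nat n * t ^ n) \<longlonglongrightarrow> 0" using powser_times_n_limit_0[of t] assms by simp
  hence "Bseq (\<lambda>n. of_nat n * t ^ n)" by (intro convergent_imp_Bseq convergentI)
  then obtain K where K: "\<And>n. norm (of_nat n * t ^ n) \<le> K" by (auto simp: Bseq_def)
  have "of_nat (Suc n) * t^n \<le> 1 + K" for n
  proof -
    have "t^n \<le> 1" using assms by (simp add: power_le_one)
    moreover have "of_nat n * t ^ n \<le> K" using K[of n] by simp
    ultimately show ?thesis by (simp add: algebra_simps)
  qed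
  thus ?thesis by blast
qed

lemma psr_dx_point:
  assumes F: "psr c r F" and x: "\<bar>x\<bar> < r" and y: "\<bar>y\<bar> < r"
  shows "((\<lambda>(i,j). dxc c i j * x ^ i * y ^ j) has_sum pdx F (x, y)) UNIV \<and>
         ((\<lambda>s. F(s,y)) has_real_derivative pdx F (x,y)) (at x)"
proof -
  define \<rho> where "\<rho> = (\<bar>x\<bar> + r) / 2"
  have \<rho>: "\<bar>x\<bar> < \<rho>" "\<rho> < r" "0 < \<rho>" using x by (auto simp: \<rho>_def)
  define g where "g = (\<lambda>(i,j). norm (c i j * \<rho> ^ i * y ^ j))"
  have "(\<lambda>(i,j). c i j * \<rho> ^ i * y ^ j) summable_on UNIV"
    using psrD[OF F, of \<rho> y] \<rho> y has_sum_imp_summable by auto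
  hence "(\<lambda>z. norm ((\<lambda>(i,j). c i j * \<rho> ^ i * y ^ j) z)) summable_on UNIV"
    using summable_on_iff_abs_summable_on_real by blast
  hence gs: "g summable_on UNIV" unfolding g_def
    by (simp add: case_prod_unfold)
  have "g summable_on (\<lambda>(i,j). (Suc i, j)) ` UNIV" using gs summable_on_subset by blast
  hence "(g \<circ> (\<lambda>(i,j). (Suc i, j))) summable_on UNIV"
    by (subst (asm) summable_on_reindex) (auto simp: inj_on_def)
  hence g2: "(\<lambda>(i,j). g (Suc i, j)) summable_on UNIV" by (simp add: o_def case_prod_unfold)
  obtain K where K: "\<And>n. of_nat (Suc n) * (\<bar>x\<bar>/\<rho>)^n \<le> K"
    using n_pow_bound[of "\<bar>x\<bar>/\<rho>"] \<rho> by auto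
  have gsum: "(\<lambda>(i,j). (K / \<rho>) * g (Suc i, j)) summable_on UNIV"
    using summable_on_cmult_right[OF g2, of "K/\<rho>"] by (simp add: case_prod_unfold)
  have bnd: "norm (dxc c i j * x ^ i * y ^ j) \<le> (K / \<rho>) * g (Suc i, j)" for i j
  proof -
    have e1: "of_nat (Suc i) * \<bar>x\<bar>^i = of_nat (Suc i) * (\<bar>x\<bar>/\<rho>)^i * \<rho>^i"
      using \<rho> by (simp add: power_divide)
    have "of_nat (Suc i) * \<bar>x\<bar>^i \<le> K * \<rho>^i"
      unfolding e1 using K[of i] \<rho> by (intro mult_right_mono) auto
    hence "of_nat (Suc i) * \<bar>x\<bar>^i * (\<bar>c (Suc i) j\<bar> * \<bar>y\<bar>^j) \<le> K * \<rho>^i * (\<bar>c (Suc i) j\<bar> * \<bar>y\<bar>^j)"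
      by (intro mult_right_mono) auto
    moreover have "norm (dxc c i j * x ^ i * y ^ j) = of_nat (Suc i) * \<bar>x\<bar>^i * (\<bar>c (Suc i) j\<bar> * \<bar>y\<bar>^j)"
      by (simp add: dxc_def abs_mult power_abs del: of_nat_Suc)
    moreover have "(K / \<rho>) * g (Suc i, j) = K * \<rho>^i * (\<bar>c (Suc i) j\<bar> * \<bar>y\<bar>^j)"
      using \<rho> by (simp add: g_def abs_mult power_abs)
    ultimately show ?thesis by simp
  qed
  have "(\<lambda>z. norm ((\<lambda>(i,j). dxc c i j * x ^ i * y ^ j) z)) summable_on UNIV"
    by (rule Infinite_Sum.abs_summable_on_comparison_test'[OF gsum]) (use bnd in auto)
  hence dsum: "(\<lambda>(i,j). dxc c i j * x ^ i * y ^ j) summable_on UNIV"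
    using abs_summable_summable by blast
  define S where "S = (\<Sum>\<^sub>\<infinity>z. (\<lambda>(i,j). dxc c i j * x ^ i * y ^ j) z)"
  have hS: "((\<lambda>(i,j). dxc c i j * x ^ i * y ^ j) has_sum S) (Sigma UNIV (\<lambda>_. UNIV))"
    using dsum unfolding S_def by simp
  define a where "a i = (\<Sum>\<^sub>\<infinity>j. c i j * y^j)" for i
  have sl: "(\<lambda>i. a i * s^i) sums F (s,y)" if "\<bar>s\<bar> < r" for s
    using psr_slice(2)[OF F y that] by (simp add: a_def)
  have "((\<lambda>i. diffs a i * x^i) has_sum S) UNIV"
  proof (rule has_sum_Sigma'[OF hS])
    fix i :: nat
    have "((\<lambda>j. c (Suc i) j * y^j) has_sum a (Suc i)) UNIV"
      using psr_slice(1)[OF F y] by (simp add: a_def)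
    from has_sum_cmult_right[OF this, of "of_nat (Suc i) * x^i"]
    show "((\<lambda>j. (\<lambda>(i,j). dxc c i j * x ^ i * y ^ j) (i, j)) has_sum diffs a i * x^i) UNIV"
      by (simp add: dxc_def diffs_def algebra_simps)
  qed
  hence Ssum: "(\<lambda>i. diffs a i * x^i) sums S" by (rule has_sum_imp_sums)
  have "summable (\<lambda>i. a i * \<rho>^i)" using sl[of \<rho>] \<rho> by (auto simp: sums_iff)
  hence "DERIV (\<lambda>s. \<Sum>i. a i * s^i) x :> (\<Sum>i. diffs a i * x^i)"
    by (rule termdiffs_strong) (use \<rho> in simp)
  hence "DERIV (\<lambda>s. \<Sum>i. a i * s^i) x :> S" using Ssum by (simp add: sums_iff)
  moreover have "open {s::real. \<bar>s\<bar> < r}" using open_ball[of "0::real" r] by (simp add: ball_def dist_real_def)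
  ultimately have D: "((\<lambda>s. F(s,y)) has_real_derivative S) (at x)"
    by (rule has_field_derivative_transform_within_open[where S = "{s. \<bar>s\<bar> < r}"])
       (use x sl in \<open>auto simp: sums_iff\<close>)
  hence "pdx F (x,y) = S" unfolding pdx_def by (simp add: DERIV_imp_deriv)
  with D hS show ?thesis by simp
qed

lemma psr_dx: "psr c r F \<Longrightarrow> psr (dxc c) r (pdx F)"
  using psr_dx_point unfolding psr_def by blast

definition dyc :: "(nat \<Rightarrow> nat \<Rightarrow> real) \<Rightarrow> nat \<Rightarrow> nat \<Rightarrow> real" where
  "dyc c i j = of_nat (Suc j) * c i (Suc j)"

lemma has_sum_swap2:
  "((\<lambda>(i,j). f i j) has_sum S) UNIV \<Longrightarrow> ((\<lambda>(i,j). f j i) has_sum S) UNIV"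
proof -
  assume "((\<lambda>(i,j). f i j) has_sum S) UNIV"
  hence "((\<lambda>(i,j). f i j) has_sum S) (UNIV \<times> UNIV)" by simp
  hence "((\<lambda>(x,y). (\<lambda>(i,j). f i j) (y,x)) has_sum S) (UNIV \<times> UNIV)"
    by (subst (asm) has_sum_swap)
  thus ?thesis by simp
qed

lemma psr_swap: assumes "psr c r F" shows "psr (\<lambda>i j. c j i) r (\<lambda>z. F (snd z, fst z))"
  unfolding psr_def
proof (intro allI impI)
  fix x y :: real assume "\<bar>x\<bar> < r \<and> \<bar>y\<bar> < r"
  hence "((\<lambda>(i,j). c i j * y ^ i * x ^ j) has_sum F (y, x)) UNIV" using psrD[OF assms] by auto
  from has_sum_swap2[OF this]
  show "((\<lambda>(i, j). c j i * x ^ i * y ^ j) has_sum F (snd (x, y), fst (x, y))) UNIV"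
    by (simp add: algebra_simps)
qed

lemma psr_dy_point:
  assumes F: "psr c r F" and x: "\<bar>x\<bar> < r" and y: "\<bar>y\<bar> < r"
  shows "((\<lambda>(i,j). dyc c i j * x ^ i * y ^ j) has_sum pdy F (x, y)) UNIV \<and>
         ((\<lambda>t. F(x,t)) has_real_derivative pdy F (x,y)) (at y)"
proof -
  have e: "pdy F (x,y) = pdx (\<lambda>z. F (snd z, fst z)) (y,x)" by (simp add: pdx_def pdy_def)
  from psr_dx_point[OF psr_swap[OF F] y x]
  have h: "((\<lambda>(i,j). dxc (\<lambda>i j. c j i) i j * y ^ i * x ^ j) has_sum pdy F (x, y)) UNIV"
     and d: "((\<lambda>t. F(x,t)) has_real_derivative pdy F (x,y)) (at y)" unfolding e by auto
  from has_sum_swap2[OF h] d show ?thesis by (simp add: dxc_def dyc_def algebra_simps)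
qed

lemma psr_dy: "psr c r F \<Longrightarrow> psr (dyc c) r (pdy F)"
  using psr_dy_point unfolding psr_def by blast

definition conv :: "(nat \<Rightarrow> nat \<Rightarrow> real) \<Rightarrow> (nat \<Rightarrow> nat \<Rightarrow> real) \<Rightarrow> nat \<Rightarrow> nat \<Rightarrow> real" where
  "conv c d i j = (\<Sum>k\<le>i. \<Sum>l\<le>j. c k l * d (i-k) (j-l))"

lemma has_sum_mult_prod:
  fixes u v :: "'a \<Rightarrow> real"
  assumes u: "(u has_sum a) A" and v: "(v has_sum b) B"
  shows "((\<lambda>(p,q). u p * v q) has_sum a*b) (A \<times> B)"
proof (rule has_sum_SigmaI[where g = "\<lambda>p. u p * b"])
  show "((\<lambda>q. (\<lambda>(p,q). u p * v q) (p, q)) has_sum u p * b) B" for p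
    using has_sum_cmult_right[OF v, of "u p"] by simp
  show "((\<lambda>p. u p * b) has_sum a * b) A" using has_sum_cmult_left[OF u] by simp
  have ua: "(\<lambda>p. norm (u p)) summable_on A"
    using u has_sum_imp_summable summable_on_iff_abs_summable_on_real by blast
  have va: "(\<lambda>q. norm (v q)) summable_on B"
    using v has_sum_imp_summable summable_on_iff_abs_summable_on_real by blast
  have "(\<lambda>z. norm ((\<lambda>(p,q). u p * v q) z)) summable_on Sigma A (\<lambda>_. B)"
  proof (subst Infinite_Sum.abs_summable_on_Sigma_iff, intro conjI ballI)
    fix p assume "p \<in> A"
    show "(\<lambda>q. norm ((\<lambda>(p,q). u p * v q) (p, q))) summable_on B"
      using summable_on_cmult_right[OF va, of "norm (u p)"] by (simp add: abs_mult)
  next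
    have e: "(\<lambda>p. norm (\<Sum>\<^sub>\<infinity>q\<in>B. norm ((\<lambda>(p,q). u p * v q) (p, q)))) = (\<lambda>p. norm (norm (u p) * (\<Sum>\<^sub>\<infinity>q\<in>B. norm (v q))))"
      by (simp add: abs_mult infsum_cmult_right')
    have "(\<lambda>p. norm (norm (u p) * (\<Sum>\<^sub>\<infinity>q\<in>B. norm (v q)))) summable_on A"
      using summable_on_cmult_left[OF ua, of "\<Sum>\<^sub>\<infinity>q\<in>B. norm (v q)"]
      by (simp add: abs_mult infsum_nonneg)
    thus "(\<lambda>p. norm (\<Sum>\<^sub>\<infinity>q\<in>B. norm ((\<lambda>(p,q). u p * v q) (p, q)))) summable_on A"
      by (subst e)
  qed
  thus "(\<lambda>(p,q). u p * v q) summable_on Sigma A (\<lambda>_. B)" using abs_summable_summable by blast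
qed

lemma psr_mult: assumes "psr c r F" "psr d r G" shows "psr (conv c d) r (\<lambda>z. F z * G z)"
  unfolding psr_def
proof (intro allI impI)
  fix x y :: real assume xy: "\<bar>x\<bar> < r \<and> \<bar>y\<bar> < r"
  define u where "u = (\<lambda>(i,j). c i j * x ^ i * y ^ j)"
  define v where "v = (\<lambda>(i,j). d i j * x ^ i * y ^ j)"
  have u: "(u has_sum F (x,y)) UNIV" and v: "(v has_sum G (x,y)) UNIV"
    using psrD[OF assms(1)] psrD[OF assms(2)] xy by (auto simp: u_def v_def)
  have P: "((\<lambda>(p,q). u p * v q) has_sum F (x,y) * G (x,y)) (UNIV \<times> UNIV)"
    by (rule has_sum_mult_prod[OF u v])
  define S where "S = Sigma (UNIV::(nat\<times>nat) set) (\<lambda>(i,j). {..i} \<times> {..j})"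
  define g where "g = (\<lambda>((i,j),(k,l)). u (k,l) * v (i-k, j-l))"
  have "(g has_sum F (x,y) * G (x,y)) S \<longleftrightarrow> ((\<lambda>(p,q). u p * v q) has_sum F (x,y) * G (x,y)) (UNIV \<times> UNIV)"
    apply (rule has_sum_reindex_bij_witness[where i = "\<lambda>((k,l),(k',l')). ((k+k',l+l'),(k,l))"
                and j = "\<lambda>((i,j),(k,l)). ((k,l),(i-k,j-l))"])
       apply (auto simp: S_def split: prod.splits)
      apply (simp add: g_def)
      done
  with P have gS: "(g has_sum F (x,y) * G (x,y)) (Sigma UNIV (\<lambda>(i,j). {..i} \<times> {..j}))"
    by (simp add: S_def)
  have "((\<lambda>(i,j). conv c d i j * x ^ i * y ^ j) has_sum F (x,y) * G (x,y)) UNIV"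
  proof (rule has_sum_Sigma'[OF gS])
    fix z :: "nat \<times> nat"
    obtain i j where z: "z = (i,j)" by force
    have "(\<Sum>w\<in>{..i} \<times> {..j}. g (z, w)) = conv c d i j * x ^ i * y ^ j"
    proof -
      have "(\<Sum>w\<in>{..i} \<times> {..j}. g (z, w)) = (\<Sum>k\<le>i. \<Sum>l\<le>j. g ((i,j),(k,l)))"
        unfolding z by (simp add: sum.cartesian_product)
      also have "\<dots> = (\<Sum>k\<le>i. \<Sum>l\<le>j. c k l * d (i-k) (j-l) * x ^ i * y ^ j)"
      proof (intro sum.cong refl)
        fix k l assume k: "k \<in> {..i}" and l: "l \<in> {..j}"
        have "x ^ i = x ^ k * x ^ (i-k)" using k by (simp add: power_add[symmetric])
        moreover have "y ^ j = y ^ l * y ^ (j-l)" using l by (simp add: power_add[symmetric])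
        ultimately show "g ((i,j),(k,l)) = c k l * d (i-k) (j-l) * x ^ i * y ^ j"
          by (simp add: g_def u_def v_def)
      qed
      also have "\<dots> = conv c d i j * x ^ i * y ^ j"
        by (simp add: conv_def sum_distrib_right)
      finally show ?thesis .
    qed
    moreover have "((\<lambda>w. g (z, w)) has_sum (\<Sum>w\<in>{..i} \<times> {..j}. g (z, w))) ({..i} \<times> {..j})"
      by (rule has_sum_finite) simp
    ultimately show "((\<lambda>w. g (z, w)) has_sum (\<lambda>(i,j). conv c d i j * x ^ i * y ^ j) z)
         ((\<lambda>(i,j). {..i} \<times> {..j}) z)" by (simp add: z)
  qed
  thus "((\<lambda>(i,j). conv c d i j * x ^ i * y ^ j) has_sum F (x,y) * G (x,y)) UNIV" .
qed

lemma ev_square: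
  assumes "eventually P (nhds (0::real, 0::real))"
  shows "\<exists>e>0. \<forall>x y. \<bar>x\<bar> < e \<and> \<bar>y\<bar> < e \<longrightarrow> P (x,y)"
proof -
  obtain d where d: "d > 0" "\<And>z. dist z (0,0) < d \<Longrightarrow> P z"
    using assms unfolding eventually_nhds_metric by blast
  have "P (x,y)" if "\<bar>x\<bar> < d/2" "\<bar>y\<bar> < d/2" for x y
  proof (rule d(2))
    have "dist (x,y) (0,0) = sqrt (x^2 + y^2)" by (simp add: dist_Pair_Pair dist_real_def)
    also have "\<dots> \<le> \<bar>x\<bar> + \<bar>y\<bar>"
      by (rule real_le_lsqrt) (auto simp: power2_eq_square abs_mult_self_eq algebra_simps)
    finally show "dist (x,y) (0,0) < d" using that by linarith
  qed
  thus ?thesis using d(1) by (intro exI[of _ "d/2"]) auto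
qed

lemma square_ev:
  assumes "e > 0" "\<And>x y. \<bar>x\<bar> < e \<Longrightarrow> \<bar>y\<bar> < e \<Longrightarrow> P (x,y)"
  shows "eventually P (nhds (0::real, 0::real))"
  unfolding eventually_nhds_metric
proof (intro exI[of _ e] conjI allI impI)
  fix z :: "real \<times> real" assume "dist z (0,0) < e"
  moreover have "dist (fst z) 0 \<le> dist z (0,0)" "dist (snd z) 0 \<le> dist z (0,0)"
    using dist_fst_le[of z "(0,0)"] dist_snd_le[of z "(0,0)"] by auto
  ultimately have "\<bar>fst z\<bar> < e" "\<bar>snd z\<bar> < e" by (auto simp: dist_real_def)
  from assms(2)[OF this] show "P z" by simp
qed (use assms in auto)

lemma ev1:
  assumes "eventually P (nhds (0::real))"
  shows "\<exists>e>0. \<forall>x. \<bar>x\<bar> < e \<longrightarrow> P x"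
  using assms unfolding eventually_nhds_metric by (auto simp: dist_real_def)

lemma ev_interval:
  assumes "\<bar>x\<bar> < e" "\<And>s. \<bar>s\<bar> < e \<Longrightarrow> P s"
  shows "eventually P (nhds (x::real))"
  unfolding eventually_nhds
proof (intro exI[of _ "{s. \<bar>s\<bar> < e}"] conjI)
  show "open {s::real. \<bar>s\<bar> < e}" using open_ball[of "0::real" e] by (simp add: ball_def dist_real_def)
qed (use assms in auto)

lemma isCont_near:
  fixes g :: "real \<Rightarrow> real"
  assumes "isCont g a" "e > 0"
  shows "\<exists>d>0. \<forall>x. \<bar>x - a\<bar> < d \<longrightarrow> \<bar>g x - g a\<bar> < e"
proof -
  obtain d where "d > 0" "\<forall>x. x \<noteq> a \<and> norm (x - a) < d \<longrightarrow> norm (g x - g a) < e"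
    using LIM_D[OF assms(1)[unfolded isCont_def] assms(2)] by blast
  hence "\<forall>x. \<bar>x - a\<bar> < d \<longrightarrow> \<bar>g x - g a\<bar> < e"
    using assms(2) by (metis abs_zero diff_self real_norm_def)
  thus ?thesis using \<open>d > 0\<close> by blast
qed

lemma deriv_zero_interval:
  assumes "\<bar>x\<bar> < e" "\<And>s. \<bar>s\<bar> < e \<Longrightarrow> g s = (0::real)"
  shows "deriv g x = 0"
proof -
  have "(g has_real_derivative 0) (at x)"
    by (rule has_field_derivative_transform_within_open[OF DERIV_const, where S = "{s. \<bar>s\<bar> < e}"])
       (use assms open_ball[of "0::real" e] in \<open>auto simp: ball_def dist_real_def\<close>)
  thus ?thesis by (rule DERIV_imp_deriv)
qed

lemma key_identity:
  assumes F: "psr c r f" and x: "\<bar>x\<bar> < r" and y: "\<bar>y\<bar> < r"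
  shows "A_F f (x,y) = (pdx (pdx f) (x,y) + pdy (pdy f) (x,y)) * B_F f (x,y)
           - 1/2 * (pdx f (x,y) * pdx (B_F f) (x,y) + pdy f (x,y) * pdy (B_F f) (x,y))"
proof -
  have "dyc (dxc c) = dxc (dyc c)" by (auto simp: fun_eq_iff dxc_def dyc_def)
  hence sym: "pdy (pdx f) (x,y) = pdx (pdy f) (x,y)"
    using psr_unique_val[OF psr_dy[OF psr_dx[OF F]] _ x y, of "pdx (pdy f)"] psr_dx[OF psr_dy[OF F]] by simp
  have dp: "((\<lambda>s. pdx f (s,y)) has_real_derivative pdx (pdx f) (x,y)) (at x)"
    using psr_dx_point[OF psr_dx[OF F] x y] by blast
  have dq: "((\<lambda>s. pdy f (s,y)) has_real_derivative pdx (pdy f) (x,y)) (at x)"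
    using psr_dx_point[OF psr_dy[OF F] x y] by blast
  have ep: "((\<lambda>t. pdx f (x,t)) has_real_derivative pdy (pdx f) (x,y)) (at y)"
    using psr_dy_point[OF psr_dx[OF F] x y] by blast
  have eq: "((\<lambda>t. pdy f (x,t)) has_real_derivative pdy (pdy f) (x,y)) (at y)"
    using psr_dy_point[OF psr_dy[OF F] x y] by blast
  have "((\<lambda>s. 1 - (pdx f (s,y))\<^sup>2 - (pdy f (s,y))\<^sup>2) has_real_derivative
          -2 * (pdx f (x,y) * pdx (pdx f) (x,y) + pdy f (x,y) * pdx (pdy f) (x,y))) (at x)"
    by (rule DERIV_cong[OF DERIV_diff[OF DERIV_diff[OF DERIV_const DERIV_power[OF dp]] DERIV_power[OF dq]]])
       (simp add: algebra_simps)
  hence Bx: "pdx (B_F f) (x,y) = -2 * (pdx f (x,y) * pdx (pdx f) (x,y) + pdy f (x,y) * pdx (pdy f) (x,y))"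
    unfolding pdx_def B_F_def by (simp add: DERIV_imp_deriv)
  have "((\<lambda>t. 1 - (pdx f (x,t))\<^sup>2 - (pdy f (x,t))\<^sup>2) has_real_derivative
          -2 * (pdx f (x,y) * pdy (pdx f) (x,y) + pdy f (x,y) * pdy (pdy f) (x,y))) (at y)"
    by (rule DERIV_cong[OF DERIV_diff[OF DERIV_diff[OF DERIV_const DERIV_power[OF ep]] DERIV_power[OF eq]]])
       (simp add: algebra_simps)
  hence By: "pdy (B_F f) (x,y) = -2 * (pdx f (x,y) * pdy (pdx f) (x,y) + pdy f (x,y) * pdy (pdy f) (x,y))"
    unfolding pdy_def B_F_def by (simp add: DERIV_imp_deriv)
  show ?thesis unfolding Bx By A_F_def B_F_def sym[symmetric]
    by (simp add: algebra_simps power2_eq_square)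
qed

lemma coeff_induct:
  assumes E: "\<And>i j. conv L Bc i j - 1/2 * (conv P (dxc Bc) i j + conv Q (dyc Bc) i j) = 0"
    and B0: "\<And>i. Bc i 0 = 0" and Q0: "Q 0 0 = 1"
  shows "Bc i j = 0"
proof (induction j arbitrary: i rule: less_induct)
  case (less j)
  show ?case
  proof (cases j)
    case 0 thus ?thesis using B0 by simp
  next
    case (Suc m)
    have low: "\<And>i' l. l \<le> m \<Longrightarrow> Bc i' l = 0" using less.IH Suc by auto
    show ?thesis unfolding Suc
    proof (induction i rule: less_induct)
      case (less i)
      have h1: "conv L Bc i m = 0" by (simp add: conv_def low)
      have h2: "conv P (dxc Bc) i m = 0" by (simp add: conv_def dxc_def low)
      have "conv Q (dyc Bc) i m = (\<Sum>k\<le>i. \<Sum>l\<le>m. (if k = 0 then (if l = 0 then of_nat (Suc m) * Bc i (Suc m) else 0) else 0))"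
        unfolding conv_def
      proof (intro sum.cong refl)
        fix k l assume k: "k \<in> {..i}" and l: "l \<in> {..m}"
        show "Q k l * dyc Bc (i - k) (m - l) = (if k = 0 then (if l = 0 then of_nat (Suc m) * Bc i (Suc m) else 0) else 0)"
        proof (cases "l = 0")
          case True
          show ?thesis
          proof (cases "k = 0")
            case False
            hence "Bc (i-k) (Suc m) = 0" using less.IH[of "i-k"] k by auto
            thus ?thesis using True False by (simp add: dyc_def)
          qed (use True Q0 in \<open>simp add: dyc_def\<close>)
        next
          case False
          hence "Bc (i-k) (Suc (m-l)) = 0" using low l by auto
          thus ?thesis using False by (simp add: dyc_def)
        qed
      qed
      also have "\<dots> = (\<Sum>k\<le>i. (if k = 0 then of_nat (Suc m) * Bc i (Suc m) else 0))"
        by (intro sum.cong refl) simp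
      also have "\<dots> = of_nat (Suc m) * Bc i (Suc m)" by simp
      finally have h3: "conv Q (dyc Bc) i m = of_nat (Suc m) * Bc i (Suc m)" .
      from E[of i m] h1 h2 h3 have "of_nat (Suc m) * Bc i (Suc m) = 0" by simp
      thus ?case by simp
    qed
  qed
qed

lemma infsum_zero_pow: "(\<Sum>\<^sub>\<infinity>j. c j * (0::real)^j) = c 0"
proof -
  have "(\<lambda>j. c j * (0::real)^j) = (\<lambda>j. if j = 0 then c 0 else 0)" by (auto simp: fun_eq_iff)
  thus ?thesis using has_sum_single[of "0::nat" "c 0"] infsumI by metis
qed

lemma normalized_setup:
  assumes "normalized_germ f"
  obtains r c where "r > 0" "psr c r f" "f (0,0) = 0" "pdx f (0,0) = 0" "pdy f (0,0) = 1"
  using assms analytic_psr unfolding normalized_germ_def by blast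

theorem corollary2p5:
  fixes f :: "real \<times> real \<Rightarrow> real"
  shows "in_Lambda f \<longleftrightarrow>
    (in_Z f \<and> (\<exists>\<psi>. in_C_omega_02 \<psi> \<and>
       (\<forall>\<^sub>F x in nhds 0. gamma_F f x = (\<psi> x, sqrt (1 - (deriv \<psi> x)\<^sup>2)))))"
proof
  assume L: "in_Lambda f"
  hence N: "normalized_germ f" and Bev: "\<forall>\<^sub>F p in nhds (0,0). B_F f p = 0" by (auto simp: in_Lambda_def)
  obtain r c where r: "r > 0" and F: "psr c r f" and f0: "f (0,0) = 0" and px0: "pdx f (0,0) = 0"
      and qy0: "pdy f (0,0) = 1" using normalized_setup[OF N] by blast
  obtain e1 where e1: "e1 > 0" "\<forall>x y. \<bar>x\<bar> < e1 \<and> \<bar>y\<bar> < e1 \<longrightarrow> B_F f (x,y) = 0"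
    using ev_square[OF Bev] by blast
  define e where "e = min e1 r"
  have e: "e > 0" "e \<le> r" "e \<le> e1" using e1 r by (auto simp: e_def)
  have Bz: "B_F f (x,y) = 0" if "\<bar>x\<bar> < e" "\<bar>y\<bar> < e" for x y
    using e1 e that by auto
  have Az: "A_F f (x,y) = 0" if xy: "\<bar>x\<bar> < e" "\<bar>y\<bar> < e" for x y
  proof -
    have "deriv (\<lambda>s. B_F f (s,y)) x = 0"
      by (rule deriv_zero_interval[of x e]) (use Bz xy in auto)
    hence bx: "pdx (B_F f) (x,y) = 0" by (simp add: pdx_def)
    have "deriv (\<lambda>t. B_F f (x,t)) y = 0"
      by (rule deriv_zero_interval[of y e]) (use Bz xy in auto)
    hence bY: "pdy (B_F f) (x,y) = 0" by (simp add: pdy_def)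
    show ?thesis using key_identity[OF F, of x y] xy e bx bY Bz[OF xy] by simp
  qed
  have inZ: "in_Z f" unfolding in_Z_def using N square_ev[OF e(1)] Az by auto
  define \<psi> where "\<psi> = (\<lambda>s. f (s,0))"
  have C: "in_C_omega_02 \<psi>"
    unfolding in_C_omega_02_def real_analytic_at1_def
  proof (intro conjI)
    show "\<exists>r>0. \<exists>c. \<forall>x. \<bar>x - 0\<bar> < r \<longrightarrow> (\<lambda>n. c n * (x - 0) ^ n) sums \<psi> x"
    proof (intro exI[of _ r] conjI exI[of _ "\<lambda>n. c n 0"] allI impI)
      fix x :: real assume "\<bar>x - 0\<bar> < r"
      hence "(\<lambda>i. (\<Sum>\<^sub>\<infinity>j. c i j * 0^j) * x^i) sums f (x,0)"
        using psr_slice(2)[OF F, of 0 x] r by simp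
      thus "(\<lambda>n. c n 0 * (x - 0) ^ n) sums \<psi> x" by (simp add: infsum_zero_pow \<psi>_def)
    qed (use r in simp)
    show "\<psi> 0 = 0" using f0 by (simp add: \<psi>_def)
    show "deriv \<psi> 0 = 0" using px0 by (simp add: \<psi>_def pdx_def)
  qed
  have "isCont (\<lambda>s. pdy f (s,0)) 0"
    using psr_dx_point[OF psr_dy[OF F], of 0 0] r by (auto intro: DERIV_isCont)
  then obtain d where d: "d > 0" "\<forall>x. \<bar>x - 0\<bar> < d \<longrightarrow> \<bar>pdy f (x,0) - pdy f (0,0)\<bar> < 1"
    using isCont_near zero_less_one by blast
  have "\<forall>\<^sub>F x in nhds 0. gamma_F f x = (\<psi> x, sqrt (1 - (deriv \<psi> x)\<^sup>2))"
  proof (rule ev_interval[of 0 "min e d"])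
    fix x :: real assume x: "\<bar>x\<bar> < min e d"
    have q: "pdy f (x,0) > 0" using d(2)[rule_format, of x] x qy0 by auto
    have dpsi: "deriv \<psi> x = pdx f (x,0)" by (simp add: \<psi>_def pdx_def)
    have "B_F f (x,0) = 0" using Bz[of x 0] x e by auto
    hence "1 - (deriv \<psi> x)\<^sup>2 = (pdy f (x,0))\<^sup>2" unfolding dpsi B_F_def by simp
    hence "sqrt (1 - (deriv \<psi> x)\<^sup>2) = pdy f (x,0)" using q by simp
    thus "gamma_F f x = (\<psi> x, sqrt (1 - (deriv \<psi> x)\<^sup>2))" by (simp add: gamma_F_def \<psi>_def)
  qed (use e d in simp)
  with inZ C show "in_Z f \<and> (\<exists>\<psi>. in_C_omega_02 \<psi> \<and>
       (\<forall>\<^sub>F x in nhds 0. gamma_F f x = (\<psi> x, sqrt (1 - (deriv \<psi> x)\<^sup>2))))" by blast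
next
  assume R: "in_Z f \<and> (\<exists>\<psi>. in_C_omega_02 \<psi> \<and>
       (\<forall>\<^sub>F x in nhds 0. gamma_F f x = (\<psi> x, sqrt (1 - (deriv \<psi> x)\<^sup>2))))"
  then obtain \<psi> where N: "normalized_germ f" and Aev: "\<forall>\<^sub>F p in nhds (0,0). A_F f p = 0"
    and G: "\<forall>\<^sub>F x in nhds 0. gamma_F f x = (\<psi> x, sqrt (1 - (deriv \<psi> x)\<^sup>2))"
    by (auto simp: in_Z_def)
  obtain r c where r: "r > 0" and F: "psr c r f" and f0: "f (0,0) = 0" and px0: "pdx f (0,0) = 0"
      and qy0: "pdy f (0,0) = 1" using normalized_setup[OF N] by blast
  obtain e1 where e1: "e1 > 0" "\<forall>x y. \<bar>x\<bar> < e1 \<and> \<bar>y\<bar> < e1 \<longrightarrow> A_F f (x,y) = 0"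
    using ev_square[OF Aev] by blast
  obtain e2 where e2: "e2 > 0" "\<forall>x. \<bar>x\<bar> < e2 \<longrightarrow> gamma_F f x = (\<psi> x, sqrt (1 - (deriv \<psi> x)\<^sup>2))"
    using ev1[OF G] by blast
  have "isCont (\<lambda>s. pdx f (s,0)) 0"
    using psr_dx_point[OF psr_dx[OF F], of 0 0] r by (auto intro: DERIV_isCont)
  then obtain d where d: "d > 0" "\<forall>x. \<bar>x - 0\<bar> < d \<longrightarrow> \<bar>pdx f (x,0) - pdx f (0,0)\<bar> < 1"
    using isCont_near zero_less_one by blast
  define e3 where "e3 = min (min e2 d) r"
  have e3: "e3 > 0" "e3 \<le> r" "e3 \<le> e2" "e3 \<le> d" using e2 d r by (auto simp: e3_def)
  have Bx0: "B_F f (x,0) = 0" if x: "\<bar>x\<bar> < e3" for x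
  proof -
    have "eventually (\<lambda>s. \<psi> s = f (s,0)) (nhds x)"
      by (rule ev_interval[of x e2]) (use x e3 e2 in \<open>auto simp: gamma_F_def\<close>)
    hence "deriv \<psi> x = deriv (\<lambda>s. f (s,0)) x" by (rule deriv_cong_ev) simp
    hence dp: "deriv \<psi> x = pdx f (x,0)" by (simp add: pdx_def)
    have q: "pdy f (x,0) = sqrt (1 - (pdx f (x,0))\<^sup>2)" using e2 x e3 dp by (auto simp: gamma_F_def)
    have "\<bar>pdx f (x,0)\<bar> < 1" using d(2)[rule_format, of x] x e3 px0 by auto
    hence "(pdx f (x,0))\<^sup>2 < 1" by (simp add: abs_square_less_1)
    thus ?thesis unfolding B_F_def q by simp
  qed
  define P where "P = dxc c"
  define Q where "Q = dyc c"
  have hP: "psr P r (pdx f)" unfolding P_def by (rule psr_dx[OF F])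
  have hQ: "psr Q r (pdy f)" unfolding Q_def by (rule psr_dy[OF F])
  define Bc where "Bc = (\<lambda>i j. one2 i j - conv P P i j - conv Q Q i j)"
  have hB: "psr Bc r (B_F f)"
    unfolding Bc_def
    by (rule psr_cong[OF psr_diff[OF psr_diff[OF psr_one psr_mult[OF hP hP]] psr_mult[OF hQ hQ]]])
       (simp add: B_F_def power2_eq_square)
  have Bc0: "Bc i 0 = 0" for i
  proof -
    define G0 where "G0 = (\<lambda>i (j::nat). if j = 0 then Bc i 0 else 0)"
    have "psr G0 e3 (\<lambda>_. 0)"
      unfolding psr_def
    proof (intro allI impI)
      fix x y :: real assume xy: "\<bar>x\<bar> < e3 \<and> \<bar>y\<bar> < e3"
      have "((\<lambda>(i,j). Bc i j * x ^ i * 0 ^ j) has_sum B_F f (x, 0)) UNIV"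
        using psrD[OF hB, of x 0] xy e3 r by auto
      moreover have "(\<lambda>(i,j). Bc i j * x ^ i * (0::real) ^ j) = (\<lambda>(i,j). G0 i j * x ^ i * y ^ j)"
        by (auto simp: fun_eq_iff G0_def)
      ultimately show "((\<lambda>(i,j). G0 i j * x ^ i * y ^ j) has_sum 0) UNIV" using Bx0[of x] xy by simp
    qed
    from psr_zero[OF this e3(1), of i 0] show ?thesis by (simp add: G0_def)
  qed
  define E where "E = (\<lambda>z. (pdx (pdx f) z + pdy (pdy f) z) * B_F f z
           - 1/2 * (pdx f z * pdx (B_F f) z + pdy f z * pdy (B_F f) z))"
  define L where "L = (\<lambda>i j. dxc P i j + dyc Q i j)"
  have hL: "psr L r (\<lambda>z. pdx (pdx f) z + pdy (pdy f) z)"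
    unfolding L_def by (rule psr_add[OF psr_dx[OF hP] psr_dy[OF hQ]])
  have hE: "psr (\<lambda>i j. conv L Bc i j - 1/2 * (conv P (dxc Bc) i j + conv Q (dyc Bc) i j)) r E"
    unfolding E_def
    by (rule psr_diff[OF psr_mult[OF hL hB] psr_cmult[OF psr_add[OF psr_mult[OF hP psr_dx[OF hB]] psr_mult[OF hQ psr_dy[OF hB]]]]])
  have "psr (\<lambda>i j. conv L Bc i j - 1/2 * (conv P (dxc Bc) i j + conv Q (dyc Bc) i j)) (min e1 r) (\<lambda>_. 0)"
  proof (rule psr_cong[OF psr_mono[OF hE]])
    fix x y :: real assume "\<bar>x\<bar> < min e1 r" "\<bar>y\<bar> < min e1 r"
    thus "E (x,y) = 0" using key_identity[OF F, of x y] e1 unfolding E_def by auto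
  qed simp
  hence Ez: "conv L Bc i j - 1/2 * (conv P (dxc Bc) i j + conv Q (dyc Bc) i j) = 0" for i j
    using psr_zero e1 r by force
  have Q0: "Q 0 0 = 1" using psr_at0[OF hQ r] qy0 by simp
  have Bcz: "Bc i j = 0" for i j by (rule coeff_induct[OF Ez Bc0 Q0])
  have "B_F f (x,y) = 0" if "\<bar>x\<bar> < r" "\<bar>y\<bar> < r" for x y
  proof -
    have "((\<lambda>(i,j). Bc i j * x ^ i * y ^ j) has_sum B_F f (x, y)) UNIV" using psrD[OF hB that] .
    moreover have "((\<lambda>(i,j). Bc i j * x ^ i * y ^ j) has_sum 0) UNIV" by (simp add: Bcz case_prod_unfold)
    ultimately show ?thesis using has_sum_unique by blast
  qed
  hence "\<forall>\<^sub>F p in nhds (0,0). B_F f p = 0" by (intro square_ev[OF r]) auto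
  with N show "in_Lambda f" by (simp add: in_Lambda_def)
qed

end
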